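(* Let $l\ge1$. Let $\mathcal I_e(l)$ (resp. $\mathcal I_o(l)$) denote the set of $l\times l$ diagonal matrices whose diagonal entries are each $1$ or $-1$ and which have an even (resp. odd) number of entries $-1$. Then for every $x\in\mathbb{R}$ and every $l\times l$ matrix $A$, $$\sum_{\overline I\in\mathcal I_e(l)}\det(xI+\overline IA)=2^{l-1}(x^l+\det A),\qquad \sum_{\overline I\in\mathcal I_o(l)}\det(xI+\overline IA)=2^{l-1}(x^l-\det A).$$
   Context: $I$ denotes the $l\times l$ identity matrix. *)

theory Defs
  imports "HOL-Analysis.Analysis"
begin

definition sign_diag_mats :: "(real^'n^'n) set" where
  "sign_diag_mats = {D. (\<forall>i j. i \<noteq> j \<longrightarrow> D $ i $ j = 0) \<and> (\<forall>i. D $ i $ i = 1 \<or> D $ i $ i = -1)}"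

definition I_even :: "(real^'n^'n) set" where
  "I_even = {D \<in> sign_diag_mats. even (card {i. D $ i $ i = -1})}"

definition I_odd :: "(real^'n^'n) set" where
  "I_odd = {D \<in> sign_diag_mats. odd (card {i. D $ i $ i = -1})}"

end

theory Submission
  imports Defs
begin

definition dg :: "('n::finite \<Rightarrow> real) \<Rightarrow> real^'n^'n" where
  "dg s = (\<chi> i j. if i = j then s i else 0)"

abbreviation PP :: "('n::finite \<Rightarrow> real) set" where
  "PP \<equiv> PiE UNIV (\<lambda>_. {1, -1})"

lemma K1:
  fixes c d :: "'n::finite \<Rightarrow> real"
  shows "(\<Sum>s\<in>PP. \<Prod>i\<in>UNIV. c i + s i * d i) = 2 ^ CARD('n) * (\<Prod>i\<in>UNIV. c i)"
proof -
  have "(\<Sum>s\<in>PP. \<Prod>i\<in>UNIV. c i + s i * d i) = (\<Prod>i\<in>UNIV. \<Sum>y\<in>{1,-1}. c i + y * d i)"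
    by (rule prod_sum_PiE[symmetric]) auto
  also have "\<dots> = (\<Prod>i\<in>UNIV. 2 * c i)" by simp
  also have "\<dots> = 2 ^ CARD('n) * (\<Prod>i\<in>UNIV. c i)" by (simp add: prod.distrib)
  finally show ?thesis .
qed

lemma K2:
  fixes c d :: "'n::finite \<Rightarrow> real"
  shows "(\<Sum>s\<in>PP. (\<Prod>i\<in>UNIV. s i) * (\<Prod>i\<in>UNIV. c i + s i * d i)) = 2 ^ CARD('n) * (\<Prod>i\<in>UNIV. d i)"
proof -
  have "(\<Sum>s\<in>PP. (\<Prod>i\<in>UNIV. s i) * (\<Prod>i\<in>UNIV. c i + s i * d i))
      = (\<Sum>s\<in>PP. \<Prod>i\<in>UNIV. s i * (c i + s i * d i))"
    by (simp add: prod.distrib)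
  also have "\<dots> = (\<Prod>i\<in>UNIV. \<Sum>y\<in>{1,-1}. y * (c i + y * d i))"
    by (rule prod_sum_PiE[symmetric]) auto
  also have "\<dots> = (\<Prod>i\<in>UNIV. 2 * d i)" by (simp add: algebra_simps)
  also have "\<dots> = 2 ^ CARD('n) * (\<Prod>i\<in>UNIV. d i)" by (simp add: prod.distrib)
  finally show ?thesis .
qed

lemma entry:
  fixes A :: "real^'n::finite^'n"
  shows "(x *\<^sub>R mat 1 + dg s ** A) $ i $ j = (if i = j then x else 0) + s i * A $ i $ j"
proof -
  have "(dg s ** A) $ i $ j = (\<Sum>k\<in>UNIV. (if i = k then s i * A $ k $ j else 0))"
    unfolding dg_def matrix_matrix_mult_def vec_lambda_beta by (rule sum.cong) auto
  also have "\<dots> = s i * A $ i $ j" by simp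
  finally show ?thesis by (simp add: mat_def)
qed

lemma detexp:
  fixes A :: "real^'n::finite^'n"
  shows "det (x *\<^sub>R mat 1 + dg s ** A) = (\<Sum>p\<in>{p. p permutes (UNIV::'n set)}. of_int (sign p) *
     (\<Prod>i\<in>UNIV. (if i = p i then x else 0) + s i * A $ i $ p i))"
  unfolding det_def entry ..

lemma T1:
  fixes A :: "real^'n::finite^'n"
  shows "(\<Sum>s\<in>PP. det (x *\<^sub>R mat 1 + dg s ** A)) = 2 ^ CARD('n) * x ^ CARD('n)"
proof -
  have "(\<Sum>s\<in>PP. det (x *\<^sub>R mat 1 + dg s ** A)) =
     (\<Sum>p\<in>{p. p permutes (UNIV::'n set)}. of_int (sign p) * (\<Sum>s\<in>PP.
     (\<Prod>i\<in>UNIV. (if i = p i then x else 0) + s i * A $ i $ p i)))"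
    unfolding detexp by (subst sum.swap) (simp add: sum_distrib_left)
  also have "\<dots> = 2 ^ CARD('n) * (\<Sum>p\<in>{p. p permutes (UNIV::'n set)}. of_int (sign p) *
     (\<Prod>i\<in>UNIV. (x *\<^sub>R mat 1 :: real^'n^'n) $ i $ p i))"
  proof -
    have e: "\<And>b. x * (if b then 1 else 0) = (if b then x else (0::real))" by simp
    show ?thesis by (simp add: K1 sum_distrib_left mat_def e algebra_simps)
  qed
  also have "\<dots> = 2 ^ CARD('n) * det (x *\<^sub>R mat 1 :: real^'n^'n)"
    unfolding det_def ..
  also have "det (x *\<^sub>R mat 1 :: real^'n^'n) = x ^ CARD('n)"
    by (subst det_diagonal) (auto simp: mat_def)
  finally show ?thesis .
qed

lemma T2:
  fixes A :: "real^'n::finite^'n"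
  shows "(\<Sum>s\<in>PP. (\<Prod>i\<in>UNIV. s i) * det (x *\<^sub>R mat 1 + dg s ** A)) = 2 ^ CARD('n) * det A"
proof -
  have "(\<Sum>s\<in>PP. (\<Prod>i\<in>UNIV. s i) * det (x *\<^sub>R mat 1 + dg s ** A)) =
     (\<Sum>p\<in>{p. p permutes (UNIV::'n set)}. of_int (sign p) * (\<Sum>s\<in>PP. (\<Prod>i\<in>UNIV. s i) *
     (\<Prod>i\<in>UNIV. (if i = p i then x else 0) + s i * A $ i $ p i)))"
    unfolding detexp sum_distrib_left by (subst sum.swap) (simp add: algebra_simps)
  also have "\<dots> = 2 ^ CARD('n) * det A"
    unfolding det_def by (simp add: K2 sum_distrib_left algebra_simps)
  finally show ?thesis .
qed

lemma dg_diag: "dg s $ i $ i = s i" by (simp add: dg_def)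

lemma S_eq: "(sign_diag_mats :: (real^'n::finite^'n) set) = dg ` PP"
proof
  show "dg ` PP \<subseteq> sign_diag_mats"
    by (auto simp: sign_diag_mats_def dg_def PiE_def Pi_def)
  show "sign_diag_mats \<subseteq> dg ` PP"
  proof
    fix D assume D: "D \<in> sign_diag_mats"
    have "D = dg (\<lambda>i. D $ i $ i)"
      using D by (auto simp: sign_diag_mats_def dg_def vec_eq_iff)
    moreover have "(\<lambda>i. D $ i $ i) \<in> PP" using D by (auto simp: sign_diag_mats_def)
    ultimately show "D \<in> dg ` PP" by blast
  qed
qed

lemma dg_inj: "inj_on (dg :: ('n::finite \<Rightarrow> real) \<Rightarrow> _) PP"
proof (rule inj_onI)
  fix s t :: "'n \<Rightarrow> real" assume "dg s = dg t"
  then have "\<And>i. dg s $ i $ i = dg t $ i $ i" by simp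
  then show "s = t" by (simp add: dg_diag fun_eq_iff)
qed

lemma parity:
  fixes s :: "'n::finite \<Rightarrow> real"
  assumes "s \<in> PP"
  shows "(\<Prod>i\<in>UNIV. s i) = (-1) ^ card {i. s i = -1}"
proof -
  have "(\<Prod>i\<in>UNIV. s i) = (\<Prod>i\<in>UNIV. if i \<in> {i. s i = -1} then -1 else 1)"
    using assms by (intro prod.cong) (auto simp: PiE_def Pi_def)
  also have "\<dots> = (-1) ^ card {i. s i = -1}"
    by (subst prod.If_cases) auto
  finally show ?thesis .
qed

lemma finS: "finite (sign_diag_mats :: (real^'n::finite^'n) set)"
  unfolding S_eq by (intro finite_imageI finite_PiE) auto

theorem lemma2p1:
  fixes x :: real and A :: "real^'n^'n"
  shows "(\<Sum>D\<in>I_even. det (x *\<^sub>R mat 1 + D ** A)) = 2 ^ (CARD('n) - 1) * (x ^ CARD('n) + det A) \<and>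
         (\<Sum>D\<in>I_odd. det (x *\<^sub>R mat 1 + D ** A)) = 2 ^ (CARD('n) - 1) * (x ^ CARD('n) - det A)"
proof -
  define G where "G s = det (x *\<^sub>R mat 1 + dg s ** A)" for s
  define n where "n = CARD('n)"
  have n1: "n \<ge> 1" unfolding n_def by (simp add: Suc_leI)
  have two: "(2::real) ^ n = 2 * 2 ^ (n - 1)" using n1
    by (metis Suc_diff_1 less_le_trans zero_less_one power_Suc)
  have red: "(\<Sum>D\<in>{D \<in> sign_diag_mats. P (card {i. D $ i $ i = -1})}. det (x *\<^sub>R mat 1 + D ** A))
      = (\<Sum>s\<in>PP. if P (card {i. s i = -1}) then G s else 0)" for P
  proof -
    have "(\<Sum>D\<in>{D \<in> sign_diag_mats. P (card {i. D $ i $ i = -1})}. det (x *\<^sub>R mat 1 + D ** A))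
      = (\<Sum>D\<in>sign_diag_mats. if P (card {i. D $ i $ i = -1}) then det (x *\<^sub>R mat 1 + D ** A) else 0)"
      using finS by (rule sum.inter_filter)
    also have "\<dots> = (\<Sum>s\<in>PP. if P (card {i. s i = -1}) then G s else 0)"
      unfolding S_eq G_def by (subst sum.reindex[OF dg_inj]) (simp add: dg_diag)
    finally show ?thesis .
  qed
  have T1': "(\<Sum>s\<in>PP. G s) = 2 ^ n * x ^ n" unfolding G_def n_def by (rule T1)
  have T2': "(\<Sum>s\<in>PP. (\<Prod>i\<in>UNIV. s i) * G s) = 2 ^ n * det A" unfolding G_def n_def by (rule T2)
  have E: "(\<Sum>s\<in>PP. if even (card {i. s i = -1}) then G s else 0)
      = (\<Sum>s\<in>PP. G s / 2 + (\<Prod>i\<in>UNIV. s i) * G s / 2)"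
    by (intro sum.cong refl) (auto simp: parity)
  have O: "(\<Sum>s\<in>PP. if odd (card {i. s i = -1}) then G s else 0)
      = (\<Sum>s\<in>PP. G s / 2 - (\<Prod>i\<in>UNIV. s i) * G s / 2)"
    by (intro sum.cong refl) (auto simp: parity)
  show ?thesis
    unfolding I_even_def I_odd_def red[of even] red[of odd] E O sum.distrib sum_subtractf
      sum_divide_distrib[symmetric] T1' T2' n_def[symmetric] two
    by (simp add: algebra_simps)
qed

end
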